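(* Let $\mathbf P=(P,\leq,{}',0,1)$ be an orthogonal lub-complete poset. Then the following conditions are equivalent: (i) $\mathbf P$ is an orthocomplemented poset. (ii) For all $x,y\in P$, $x\leq y$ implies $x\rightarrow_S y=1$. (iii) For all $x,y\in P$, $x\leq y$ implies $x\rightarrow_D y=1$.
   Context: $(P,\leq,{}',0,1)$ is a bounded poset with an antitone involution ${}'$; orthogonal means $x\leq y'$ implies $x\vee y$ exists; lub-complete means for every lower bound $x$ of a finite subset $M$ there is a maximal lower bound of $M$ above $x$; orthocomplemented means $x\vee x'=1$ for all $x$. $L(x,y)$ is the set of common lower bounds and $\mathrm{Max}\,A$ the set of maximal elements of $A$; joins with sets are elementwise. Sasaki implication: $x\rightarrow_S y:=x'\vee \mathrm{Max}\,L(x,y)$; Dishkant implication: $x\rightarrow_D y:=y'\rightarrow_S x'=y\vee \mathrm{Max}\,L(x',y')$. "$=1$" means equal to $\{1\}$. *)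

theory Defs
  imports Main
begin

text \<open>A poset is modelled by a type of class order. The antitone involution is c,
  the bounds are z (bottom) and u (top).\<close>

definition bounded_poset_ai :: "('a::order \<Rightarrow> 'a) \<Rightarrow> 'a \<Rightarrow> 'a \<Rightarrow> bool" where
  "bounded_poset_ai c z u \<longleftrightarrow>
     (\<forall>x. z \<le> x \<and> x \<le> u) \<and>
     (\<forall>x y. x \<le> y \<longrightarrow> c y \<le> c x) \<and>
     (\<forall>x. c (c x) = x)"

definition is_join :: "'a::order \<Rightarrow> 'a \<Rightarrow> 'a \<Rightarrow> bool" where
  "is_join x y s \<longleftrightarrow> x \<le> s \<and> y \<le> s \<and> (\<forall>t. x \<le> t \<and> y \<le> t \<longrightarrow> s \<le> t)"

definition orthogonal :: "('a::order \<Rightarrow> 'a) \<Rightarrow> bool" where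
  "orthogonal c \<longleftrightarrow> (\<forall>x y. x \<le> c y \<longrightarrow> (\<exists>s. is_join x y s))"

definition lower_bounds :: "'a::order set \<Rightarrow> 'a set" where
  "lower_bounds M = {x. \<forall>m\<in>M. x \<le> m}"

definition Maxs :: "'a::order set \<Rightarrow> 'a set" where
  "Maxs A = {a \<in> A. \<forall>b\<in>A. a \<le> b \<longrightarrow> b = a}"

definition lub_complete :: "'a::order itself \<Rightarrow> bool" where
  "lub_complete _ \<longleftrightarrow>
     (\<forall>M::'a set. finite M \<longrightarrow>
        (\<forall>x \<in> lower_bounds M. \<exists>w \<in> Maxs (lower_bounds M). x \<le> w))"

definition orthocomplemented :: "('a::order \<Rightarrow> 'a) \<Rightarrow> 'a \<Rightarrow> bool" where
  "orthocomplemented c u \<longleftrightarrow> (\<forall>x. is_join x (c x) u)"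

definition L :: "'a::order \<Rightarrow> 'a \<Rightarrow> 'a set" where
  "L x y = {w. w \<le> x \<and> w \<le> y}"

definition join_set :: "'a::order \<Rightarrow> 'a set \<Rightarrow> 'a set" where
  "join_set x A = {s. \<exists>a\<in>A. is_join x a s}"

definition sasaki :: "('a::order \<Rightarrow> 'a) \<Rightarrow> 'a \<Rightarrow> 'a \<Rightarrow> 'a set" where
  "sasaki c x y = join_set (c x) (Maxs (L x y))"

definition dishkant :: "('a::order \<Rightarrow> 'a) \<Rightarrow> 'a \<Rightarrow> 'a \<Rightarrow> 'a set" where
  "dishkant c x y = sasaki c (c y) (c x)"

end

theory Submission
  imports Defs
begin

lemma maxs_L: "(x::'a::order) \<le> y \<Longrightarrow> Maxs (L x y) = {x}"
  unfolding Maxs_def L_def by (auto intro: order.antisym)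

lemma join_uniq: "is_join a b s \<Longrightarrow> is_join a b t \<Longrightarrow> s = (t::'a::order)"
  unfolding is_join_def by (meson order.antisym)

lemma join_sym: "is_join a b s \<longleftrightarrow> is_join b (a::'a::order) s"
  unfolding is_join_def by blast

lemma sasaki_le: "(x::'a::order) \<le> y \<Longrightarrow> sasaki c x y = {s. is_join (c x) x s}"
  unfolding sasaki_def join_set_def by (simp add: maxs_L)

lemma singleton_iff: "\<exists>s. is_join a b s \<Longrightarrow> ({s. is_join a b s} = {u}) \<longleftrightarrow> is_join a b (u::'a::order)"
  using join_uniq by blast

theorem theorem7:
  fixes c :: "'a::order \<Rightarrow> 'a" and z u :: 'a
  assumes "bounded_poset_ai c z u"
    and "orthogonal c"
    and "lub_complete TYPE('a)"
  shows "(orthocomplemented c u \<longleftrightarrow> (\<forall>x y. x \<le> y \<longrightarrow> sasaki c x y = {u}))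
       \<and> (orthocomplemented c u \<longleftrightarrow> (\<forall>x y. x \<le> y \<longrightarrow> dishkant c x y = {u}))"
proof -
  have cc: "\<And>x. c (c x) = x" and anti: "\<And>x y. x \<le> y \<Longrightarrow> c y \<le> c x"
    using assms(1) unfolding bounded_poset_ai_def by auto
  have ex: "\<And>x. \<exists>s. is_join (c x) x s"
    using assms(2) cc unfolding orthogonal_def by (metis order.refl)
  have S: "\<And>x y. x \<le> y \<Longrightarrow> sasaki c x y = {u} \<longleftrightarrow> is_join x (c x) u"
    proof -
    fix x y :: 'a assume "x \<le> y"
    have "{s. is_join (c x) x s} = {s. is_join x (c x) s}" using join_sym by blast
    moreover have "\<exists>s. is_join x (c x) s" using ex join_sym by blast
    ultimately show "sasaki c x y = {u} \<longleftrightarrow> is_join x (c x) u"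
      using sasaki_le[OF \<open>x \<le> y\<close>] singleton_iff by metis
  qed
  have D: "\<And>x y. x \<le> y \<Longrightarrow> dishkant c x y = {u} \<longleftrightarrow> is_join y (c y) u"
  proof -
    fix x y :: 'a assume "x \<le> y"
    hence "c y \<le> c x" by (rule anti)
    thus "dishkant c x y = {u} \<longleftrightarrow> is_join y (c y) u"
      unfolding dishkant_def using S[of "c y" "c x"] cc join_sym by simp
  qed
  show ?thesis
    unfolding orthocomplemented_def using S D by (meson order.refl)
qed

end
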